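(* In the setting of the context, for $c\in\mathbb{R}$ let $P(c)$ be the polygon with vertices $P_i(c)=M_i+cU_i$, $1\le i\le 2n$, and write $P_{i+1}(c)-P_i(c)=\lambda_{i+\frac12}(c)V_{i+\frac12}$. If all $\lambda_{i+\frac12}(c)\ge0$, then the $V$-length of $P(c)$ satisfies $$L_V(P(c))=\sum_{i=1}^{2n}\lambda_{i+\frac12}(c)=2c\,A(U),$$ where $A(U)=\frac12\sum_{i=1}^{2n}[U_i,U_{i+1}]$ is the area of $U$.
   Context: $[x,y]$ denotes the determinant of the matrix with columns $x,y\in\mathbb{R}^2$. Fix $n\ge2$; indices (integer and half-integer) are read modulo $2n$. $U$ is a convex $2n$-gon with distinct vertices $U_1,\dots,U_{2n}$ in counterclockwise order with $U_{i+n}=-U_i$, and $V_{i+\frac12}=(U_{i+1}-U_i)/[U_i,U_{i+1}]$. Let $a>0$ and let $P$ be a convex polygon with nonempty interior and vertex list $P_1,\dots,P_{2n}$ (consecutive entries may coincide) with $P_{i+1}-P_i$ a nonnegative multiple of $V_{i+\frac12}$ and $P_i-P_{i+n}=2aU_i$ for all $i$ (a polygon of constant $U$-width). Its central equidistant $M$ has vertices $M_i=\frac12(P_i+P_{i+n})$ (so $M_{i+n}=M_i$). The $V$-length of a polygon $Q_1,\dots,Q_{2n}$ with $Q_{i+1}-Q_i=\lambda_{i+\frac12}V_{i+\frac12}$, $\lambda_{i+\frac12}\ge0$, is $L_V(Q)=\sum_i\lambda_{i+\frac12}$. *)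

theory Defs
  imports "HOL-Analysis.Analysis"
begin

text \<open>Polygons are given by
  vertex functions on nat, periodic with period N (indices read modulo N);
  the half-integer index i+1/2 is represented by the integer i.\<close>

definition det2 :: "real \<times> real \<Rightarrow> real \<times> real \<Rightarrow> real" where
  "det2 x y = fst x * snd y - snd x * fst y"

definition periodic :: "nat \<Rightarrow> (nat \<Rightarrow> 'a) \<Rightarrow> bool" where
  "periodic N Q \<longleftrightarrow> (\<forall>i. Q (i + N) = Q i)"

definition convex_ccw_polygon :: "nat \<Rightarrow> (nat \<Rightarrow> real \<times> real) \<Rightarrow> bool" where
  "convex_ccw_polygon N Q \<longleftrightarrow> 3 \<le> N \<and> periodic N Q \<and>
     (\<forall>i<N. \<forall>j<N. i \<noteq> j \<longrightarrow> Q i \<noteq> Q j) \<and>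
     (\<forall>i<N. \<forall>j<N. j \<noteq> i \<and> j \<noteq> Suc i mod N \<longrightarrow> det2 (Q (Suc i) - Q i) (Q j - Q i) > 0)"

definition Vdir :: "(nat \<Rightarrow> real \<times> real) \<Rightarrow> nat \<Rightarrow> real \<times> real" where
  "Vdir U i = (1 / det2 (U i) (U (Suc i))) *\<^sub>R (U (Suc i) - U i)"

definition areaU :: "nat \<Rightarrow> (nat \<Rightarrow> real \<times> real) \<Rightarrow> real" where
  "areaU n U = (1/2) * (\<Sum>i<2*n. det2 (U i) (U (Suc i)))"

definition const_width_polygon :: "nat \<Rightarrow> (nat \<Rightarrow> real \<times> real) \<Rightarrow> real \<Rightarrow> (nat \<Rightarrow> real \<times> real) \<Rightarrow> bool" where
  "const_width_polygon n U a P \<longleftrightarrow> periodic (2*n) P \<and>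
     interior (convex hull (P ` {..<2*n})) \<noteq> {} \<and>
     (\<forall>i. \<exists>t\<ge>0. P (Suc i) - P i = t *\<^sub>R Vdir U i) \<and>
     (\<forall>i. P i - P (i + n) = (2 * a) *\<^sub>R U i)"

definition central_equidistant :: "nat \<Rightarrow> (nat \<Rightarrow> real \<times> real) \<Rightarrow> nat \<Rightarrow> real \<times> real" where
  "central_equidistant n P i = (1/2) *\<^sub>R (P i + P (i + n))"

end

theory Submission
  imports Defs
begin

lemma idx: assumes "k < 2*n" "2 \<le> n" shows "(k+n) mod (2*n) \<noteq> k \<and> (k+n) mod (2*n) \<noteq> Suc k mod (2*n)"
proof (cases "k+n < 2*n")
  case True
  hence e: "(k+n) mod (2*n) = k+n" by (rule mod_less)
  have "Suc k < 2*n" using True assms by linarith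
  hence "Suc k mod (2*n) = Suc k" by (rule mod_less)
  thus ?thesis using e assms by linarith
next
  case False
  hence "(k+n) mod (2*n) = (k+n - 2*n) mod (2*n)" by (simp add: le_mod_geq)
  also have "k+n-2*n < 2*n" using assms by linarith
  hence "(k+n - 2*n) mod (2*n) = k+n-2*n" by (rule mod_less)
  finally have e: "(k+n) mod (2*n) = k+n-2*n" .
  show ?thesis
  proof (cases "Suc k < 2*n")
    case True
    hence "Suc k mod (2*n) = Suc k" by (rule mod_less)
    thus ?thesis using e assms False by linarith
  next
    case False
    hence "Suc k = 2*n" using assms by linarith
    hence "Suc k mod (2*n) = 0" by simp
    thus ?thesis using e assms False by linarith
  qed
qed

lemma conv_det: "convex_ccw_polygon N Q \<Longrightarrow> i<N \<Longrightarrow> j<N \<Longrightarrow> j\<noteq>i \<Longrightarrow> j \<noteq> Suc i mod N \<Longrightarrow> det2 (Q (Suc i) - Q i) (Q j - Q i) > 0"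
  unfolding convex_ccw_polygon_def by blast

theorem proposition3p1:
  fixes n :: nat and U P :: "nat \<Rightarrow> real \<times> real" and a c :: real
    and lam :: "nat \<Rightarrow> real"
  assumes "n \<ge> 2"
    and "convex_ccw_polygon (2*n) U"
    and "\<forall>i. U (i + n) = - U i"
    and "a > 0"
    and "const_width_polygon n U a P"
    and "\<forall>i. (central_equidistant n P (Suc i) + c *\<^sub>R U (Suc i))
               - (central_equidistant n P i + c *\<^sub>R U i) = lam i *\<^sub>R Vdir U i"
    and "\<forall>i. lam i \<ge> 0"
  shows "(\<Sum>i<2*n. lam i) = 2 * c * areaU n U"
proof -
  define d where "d i = det2 (U i) (U (Suc i))" for i
  have per: "\<And>i. U (i + 2*n) = U i" using assms(2) unfolding convex_ccw_polygon_def periodic_def by blast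
  have Umk: "U (j + k * (2*n)) = U j" for j k
    by (induction k) (simp_all, metis add.assoc add.commute per)
  have Umod: "U (i mod (2*n)) = U i" for i
    using Umk[of "i mod (2*n)" "i div (2*n)"] by (metis div_mult_mod_eq add.commute)
  have dpos: "d i > 0" for i
  proof -
    let ?i = "i mod (2*n)"
    have ilt: "?i < 2*n" using assms(1) by simp
    let ?j = "(?i + n) mod (2*n)"
    have jlt: "?j < 2*n" using assms(1) by simp
    have j1: "?j \<noteq> ?i" and j2: "?j \<noteq> Suc ?i mod (2*n)"
      using idx[OF ilt assms(1)] by blast+
    have "det2 (U (Suc ?i) - U ?i) (U ?j - U ?i) > 0"
      using conv_det[OF assms(2) ilt jlt j1 j2] .
    moreover have "U ?j = - U i"
    proof -
      have "U ?j = U (?i + n)" by (rule Umod)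
      also have "\<dots> = - U ?i" using assms(3) by blast
      also have "\<dots> = - U i" using Umod[of i] by (rule arg_cong)
      finally show ?thesis .
    qed
    moreover have "U ?i = U i" by (rule Umod)
    moreover have "U (Suc ?i) = U (Suc i)" using Umod[of "Suc ?i"] Umod[of "Suc i"] mod_Suc_eq[of i "2*n"] by metis
    ultimately have "det2 (U (Suc i) - U i) (- U i - U i) > 0" by simp
    thus ?thesis unfolding d_def det2_def by (simp add: algebra_simps)
  qed
  define V where "V i = Vdir U i" for i
  have UV: "U (Suc i) - U i = d i *\<^sub>R V i" for i
    using dpos[of i] unfolding V_def Vdir_def d_def by simp
  have Vne: "V i \<noteq> 0" for i
  proof
    assume "V i = 0"
    hence "U (Suc i) = U i" using UV[of i] by simp
    thus False using dpos[of i] unfolding d_def det2_def by (simp add: algebra_simps)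
  qed
  have Vn: "V (i + n) = - V i" for i
  proof -
    have "U (Suc (i+n)) = - U (Suc i)" using assms(3) by (metis add_Suc)
    thus ?thesis using assms(3) unfolding V_def Vdir_def det2_def
      by (simp add: algebra_simps)
  qed
  have "\<forall>i. \<exists>t\<ge>0. P (Suc i) - P i = t *\<^sub>R Vdir U i"
    using assms(5) unfolding const_width_polygon_def by blast
  then obtain t where t: "\<And>i. P (Suc i) - P i = t i *\<^sub>R V i"
    unfolding V_def by metis
  define mu where "mu i = (t i - t (i+n)) / 2" for i
  have lam_eq: "lam i = mu i + c * d i" for i
  proof -
    have "lam i *\<^sub>R V i = (1/2) *\<^sub>R ((P (Suc i) - P i) + (P (Suc i + n) - P (i + n)))
           + c *\<^sub>R (U (Suc i) - U i)"
      using assms(6) unfolding V_def central_equidistant_def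
      by (simp add: algebra_simps)
    also have "\<dots> = (1/2) *\<^sub>R (t i *\<^sub>R V i + t (i+n) *\<^sub>R V (i+n)) + c *\<^sub>R (d i *\<^sub>R V i)"
      using t[of i] t[of "i+n"] UV[of i] by simp
    also have "\<dots> = (mu i + c * d i) *\<^sub>R V i"
      unfolding Vn mu_def by (simp add: scaleR_add_left scaleR_diff_left scaleR_add_right scaleR_diff_right diff_divide_distrib)
    finally show ?thesis using Vne[of i] by simp
  qed
  have mun: "mu (i + n) = - mu i" for i
  proof -
    have "t (i + n + n) *\<^sub>R V i = t i *\<^sub>R V i"
    proof -
      have "P (i+n+n) = P i" using assms(5) unfolding const_width_polygon_def periodic_def
        by (metis mult_2 add.assoc)
      moreover have "P (Suc (i+n+n)) = P (Suc i)" using assms(5) unfolding const_width_polygon_def periodic_def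
        by (metis mult_2 add.assoc add_Suc)
      moreover have "V (i+n+n) = V i" using Vn by simp
      ultimately show ?thesis using t[of "i+n+n"] t[of i] by (simp add: eq_commute)
    qed
    hence "t (i+n+n) = t i" using Vne[of i] by simp
    thus ?thesis unfolding mu_def by (simp add: field_simps)
  qed
  have summu: "(\<Sum>i<2*n. mu i) = 0"
  proof -
    have "(\<Sum>i<2*n. mu i) = (\<Sum>i<n. mu i) + (\<Sum>i=n..<n+n. mu i)"
      by (metis mult_2 sum.atLeastLessThan_concat le_add1 zero_le atLeast0LessThan)
    also have "(\<Sum>i=n..<n+n. mu i) = (\<Sum>i=0..<n. mu (i+n))"
      using sum.shift_bounds_nat_ivl[of mu 0 n n] by simp
    also have "\<dots> = - (\<Sum>i<n. mu i)" by (simp add: mun sum_negf atLeast0LessThan)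
    finally show ?thesis by simp
  qed
  have "(\<Sum>i<2*n. lam i) = (\<Sum>i<2*n. mu i) + c * (\<Sum>i<2*n. d i)"
    by (simp add: lam_eq sum.distrib sum_distrib_left)
  thus ?thesis using summu unfolding areaU_def d_def by simp
qed

end
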